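(* Let $G$ be a gap sequence of genus $g$ with associated partition $\lambda$, and $0\le k\le g-1$. Then (i) $a^{(k)}_1>\dots>a^{(k)}_{m_k}\ge1$; (ii) each $a^{(k)}_i$ belongs to $G$; (iii) $\sum_{i=1}^{m_k}a^{(k)}_i=N_{\lambda,k}$.
   Context: A gap sequence of genus $g\ge1$ is a set $G\subset\mathbb Z_{\ge0}$ with $\#G=g$ whose complement $G^c$ contains $0$ and is closed under addition; $G=\{w_1<\dots<w_g\}$, $G^c=\{0=w_1^*<w_2^*<\cdots\}$, $\lambda=(w_g,\dots,w_1)-(g-1,\dots,1,0)$. $m_k=\#\{i:w_i^*<g-k\}$, $a^{(k)}_j=w_{g-k-j+1}-w_j^*$ for $1\le j\le m_k$. $N_{\lambda,k}=\lambda_{k+1}+\dots+\lambda_g$. *)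

theory Defs
  imports Main "HOL-Library.Infinite_Set"
begin

definition gap_sequence :: "nat set \<Rightarrow> bool" where
  "gap_sequence G \<longleftrightarrow> finite G \<and> card G \<ge> 1 \<and> 0 \<notin> G \<and>
     (\<forall>x y. x \<notin> G \<longrightarrow> y \<notin> G \<longrightarrow> x + y \<notin> G)"

definition gap_w :: "nat set \<Rightarrow> nat \<Rightarrow> nat" where
  "gap_w G i = sorted_list_of_set G ! (i - 1)"

text \<open>w*_i, the i-th smallest non-gap (1-indexed, so w*_1 = 0).\<close>
definition gap_wstar :: "nat set \<Rightarrow> nat \<Rightarrow> nat" where
  "gap_wstar G i = enumerate (- G) (i - 1)"

definition gap_lambda :: "nat set \<Rightarrow> nat \<Rightarrow> int" where
  "gap_lambda G i = int (gap_w G (card G + 1 - i)) - int (card G - i)"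

definition gap_N :: "nat set \<Rightarrow> nat \<Rightarrow> int" where
  "gap_N G k = (\<Sum>i = k + 1..card G. gap_lambda G i)"

definition gap_m :: "nat set \<Rightarrow> nat \<Rightarrow> nat" where
  "gap_m G k = card {i. 1 \<le> i \<and> int (gap_wstar G i) < int (card G) - int k}"

definition gap_a :: "nat set \<Rightarrow> nat \<Rightarrow> nat \<Rightarrow> int" where
  "gap_a G k j = int (gap_w G (card G - k - j + 1)) - int (gap_wstar G j)"

end

theory Submission
  imports Defs
begin

theorem lemma2p1:
  fixes G :: "nat set" and k :: nat
  assumes "gap_sequence G"
    and "k \<le> card G - 1"
  shows "(\<forall>i j. 1 \<le> i \<and> i < j \<and> j \<le> gap_m G k \<longrightarrow> gap_a G k i > gap_a G k j)
       \<and> (\<forall>i. 1 \<le> i \<and> i \<le> gap_m G k \<longrightarrow> gap_a G k i \<ge> 1)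
       \<and> (\<forall>i. 1 \<le> i \<and> i \<le> gap_m G k \<longrightarrow> gap_a G k i \<in> int ` G)
       \<and> (\<Sum>i = 1..gap_m G k. gap_a G k i) = gap_N G k"
proof -
  define g where "g = card G"
  define n where "n = g - k"
  define L where "L = sorted_list_of_set G"
  define N where "N = - G"
  define e where "e = enumerate N"
  have finG: "finite G" and g1: "g \<ge> 1" and G0: "0 \<notin> G"
    and clos: "\<And>x y. x \<notin> G \<Longrightarrow> y \<notin> G \<Longrightarrow> x + y \<notin> G"
    using assms(1) unfolding gap_sequence_def g_def by auto
  have kg: "k < g" using assms(2) g1 g_def by linarith
  have n1: "n \<ge> 1" "n \<le> g" using kg n_def by auto
  have infN: "infinite N" unfolding N_def
    using finG by (metis Compl_eq_Diff_UNIV Diff_infinite_finite infinite_UNIV_nat)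
  have emono: "\<And>i j. i < j \<Longrightarrow> e i < e j" unfolding e_def using enumerate_mono infN by blast
  have emono_iff: "\<And>i j. e i < e j \<longleftrightarrow> i < j" using emono
    by (metis less_asym nat_neq_iff)
  have einj: "inj e" unfolding e_def using inj_enumerate infN by blast
  have eN: "\<And>i. e i \<in> N" unfolding e_def using enumerate_in_set infN by blast
  have eEx: "\<And>x. x \<in> N \<Longrightarrow> \<exists>i. e i = x" unfolding e_def using enumerate_Ex infN by blast
  have lenL: "length L = g" unfolding L_def g_def by simp
  have setL: "set L = G" unfolding L_def using finG by simp
  have sortL: "sorted_wrt (<) L" unfolding L_def by simp
  have Lmono: "\<And>s t. s < t \<Longrightarrow> t < g \<Longrightarrow> L ! s < L ! t"
    using sortL lenL by (simp add: sorted_wrt_iff_nth_less)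
  have Lmono_iff: "\<And>s t. s < g \<Longrightarrow> t < g \<Longrightarrow> L ! s < L ! t \<longleftrightarrow> s < t"
    using Lmono by (metis less_asym nat_neq_iff)
  have LG: "\<And>s. s < g \<Longrightarrow> L ! s \<in> G" using setL lenL nth_mem by blast
  have LEx: "\<And>x. x \<in> G \<Longrightarrow> \<exists>s<g. L ! s = x" using setL lenL by (metis in_set_conv_nth)
  have Linj: "inj_on (\<lambda>s. L ! s) {..<g}"
    by (rule inj_onI) (metis Lmono lessThan_iff nat_neq_iff less_irrefl)
  define m where "m = card (N \<inter> {..<n})"
  define p where "p = card (G \<inter> {..<n})"
  have echar: "\<And>j. e j < n \<longleftrightarrow> j < m"
  proof
    fix j assume "e j < n"
    hence "e ` {..j} \<subseteq> N \<inter> {..<n}" using eN emono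
      by (auto, metis le_eq_less_or_eq order.strict_trans)
    hence "card (e ` {..j}) \<le> m" unfolding m_def by (intro card_mono) auto
    moreover have "card (e ` {..j}) = Suc j" using einj
      by (simp add: card_image inj_on_subset)
    ultimately show "j < m" by simp
  next
    fix j assume jm: "j < m"
    show "e j < n"
    proof (rule ccontr)
      assume "\<not> e j < n"
      hence "N \<inter> {..<n} \<subseteq> e ` {..<j}"
        using eEx emono_iff by (auto, metis image_eqI le_less_trans lessThan_iff not_less)
      hence "m \<le> card (e ` {..<j})" unfolding m_def by (intro card_mono) auto
      also have "\<dots> = j" using einj by (simp add: card_image inj_on_subset)
      finally show False using jm by simp
    qed
  qed
  have pg: "p \<le> g" unfolding p_def g_def using finG by (intro card_mono) auto
  have Lchar: "\<And>s. s < g \<Longrightarrow> L ! s < n \<longleftrightarrow> s < p"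
  proof
    fix s assume sg: "s < g" and "L ! s < n"
    hence "(\<lambda>s. L ! s) ` {..s} \<subseteq> G \<inter> {..<n}" using LG Lmono
      by (auto, metis le_eq_less_or_eq le_less_trans order.strict_trans)
    hence "card ((\<lambda>s. L ! s) ` {..s}) \<le> p" unfolding p_def by (intro card_mono) auto
    moreover have "card ((\<lambda>s. L ! s) ` {..s}) = Suc s" using Linj sg
      by (subst card_image) (auto intro: inj_on_subset)
    ultimately show "s < p" by simp
  next
    fix s assume sg: "s < g" and sp: "s < p"
    show "L ! s < n"
    proof (rule ccontr)
      assume "\<not> L ! s < n"
      hence "G \<inter> {..<n} \<subseteq> (\<lambda>s. L ! s) ` {..<s}"
        using LEx Lmono_iff sg by (auto, metis image_eqI le_less_trans lessThan_iff not_less)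
      hence "p \<le> card ((\<lambda>s. L ! s) ` {..<s})" unfolding p_def by (intro card_mono) auto
      also have "\<dots> = s" using Linj sg by (subst card_image) (auto intro: inj_on_subset)
      finally show False using sp by simp
    qed
  qed
  have Nset: "N \<inter> {..<n} = e ` {..<m}"
    using echar eN eEx by (auto, metis image_eqI lessThan_iff)
  have Gset: "G \<inter> {..<n} = (\<lambda>s. L ! s) ` {..<p}"
  proof
    show "G \<inter> {..<n} \<subseteq> (\<lambda>s. L ! s) ` {..<p}"
    proof
      fix x assume "x \<in> G \<inter> {..<n}"
      then obtain s where "s < g" "L ! s = x" "x < n" using LEx by blast
      thus "x \<in> (\<lambda>s. L ! s) ` {..<p}" using Lchar by auto
    qed
    show "(\<lambda>s. L ! s) ` {..<p} \<subseteq> G \<inter> {..<n}"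
      using LG Lchar pg by auto
  qed
  have mpn: "m + p = n"
  proof -
    have "{..<n} = (N \<inter> {..<n}) \<union> (G \<inter> {..<n})" unfolding N_def by auto
    hence "card {..<n} = m + p" unfolding m_def p_def
      by (metis N_def card_Un_disjoint Compl_disjoint2 finite_Int finite_lessThan inf_commute
          Int_assoc Int_commute Int_empty_left inf_sup_aci(1))
    thus ?thesis by simp
  qed
  have gm: "gap_m G k = m"
  proof -
    have "{i. 1 \<le> i \<and> int (gap_wstar G i) < int (card G) - int k} = {1..m}"
    proof -
      have "\<And>i. int (gap_wstar G i) < int (card G) - int k \<longleftrightarrow> e (i - 1) < n"
        unfolding gap_wstar_def e_def N_def n_def g_def using kg g_def by auto
      thus ?thesis using echar by fastforce
    qed
    thus ?thesis unfolding gap_m_def by simp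
  qed
  have ga: "\<And>j. 1 \<le> j \<Longrightarrow> j \<le> m \<Longrightarrow> gap_a G k j = int (L ! (n - j)) - int (e (j - 1))"
  proof -
    fix j assume "1 \<le> j" "j \<le> m"
    hence "card G - k - j + 1 - 1 = n - j" using mpn n_def g_def by auto
    thus "gap_a G k j = int (L ! (n - j)) - int (e (j - 1))"
      unfolding gap_a_def gap_w_def gap_wstar_def L_def e_def N_def by simp
  qed
  have big: "\<And>j. 1 \<le> j \<Longrightarrow> j \<le> m \<Longrightarrow> e (j - 1) < L ! (n - j)"
  proof -
    fix j assume j: "1 \<le> j" "j \<le> m"
    have "n - j < g" using j n1 by linarith
    moreover have "\<not> n - j < p" using j mpn by linarith
    ultimately have "n \<le> L ! (n - j)" using Lchar by (meson not_less)
    moreover have "e (j - 1) < n" using echar j by simp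
    ultimately show "e (j - 1) < L ! (n - j)" by simp
  qed
  have P1: "\<forall>i j. 1 \<le> i \<and> i < j \<and> j \<le> gap_m G k \<longrightarrow> gap_a G k i > gap_a G k j"
  proof (intro allI impI)
    fix i j assume h: "1 \<le> i \<and> i < j \<and> j \<le> gap_m G k"
    have "L ! (n - j) < L ! (n - i)" using h gm mpn n1 by (intro Lmono) auto
    moreover have "e (i - 1) < e (j - 1)" using h by (intro emono) auto
    ultimately show "gap_a G k i > gap_a G k j" using h gm ga by simp
  qed
  have P2: "\<forall>i. 1 \<le> i \<and> i \<le> gap_m G k \<longrightarrow> gap_a G k i \<ge> 1"
    using ga big gm by fastforce
  have P3: "\<forall>i. 1 \<le> i \<and> i \<le> gap_m G k \<longrightarrow> gap_a G k i \<in> int ` G"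
  proof (intro allI impI)
    fix j assume h: "1 \<le> j \<and> j \<le> gap_m G k"
    hence j: "1 \<le> j" "j \<le> m" using gm by auto
    define d where "d = L ! (n - j) - e (j - 1)"
    have eq: "gap_a G k j = int d" using ga[OF j] big[OF j] d_def by simp
    have "L ! (n - j) \<in> G" using LG j n1 by simp
    moreover have "e (j - 1) \<notin> G" using eN N_def by auto
    moreover have "L ! (n - j) = d + e (j - 1)" using big[OF j] d_def by simp
    ultimately have "d \<in> G" using clos by metis
    thus "gap_a G k j \<in> int ` G" using eq by simp
  qed
  have P4: "(\<Sum>i = 1..gap_m G k. gap_a G k i) = gap_N G k"
  proof -
    have s1: "(\<Sum>s<n. int s) = (\<Sum>t<p. int (L ! t)) + (\<Sum>j<m. int (e j))"
    proof -
      have "{..<n} = (G \<inter> {..<n}) \<union> (N \<inter> {..<n})" unfolding N_def by auto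
      hence "(\<Sum>s<n. int s) = (\<Sum>s\<in>G \<inter> {..<n}. int s) + (\<Sum>s\<in>N \<inter> {..<n}. int s)"
        by (metis N_def sum.union_disjoint Compl_disjoint finite_Int finite_lessThan
            Int_assoc Int_commute Int_empty_left inf_commute)
      also have "(\<Sum>s\<in>G \<inter> {..<n}. int s) = (\<Sum>t<p. int (L ! t))"
        unfolding Gset using Linj pg by (subst sum.reindex) (auto intro: inj_on_subset)
      also have "(\<Sum>s\<in>N \<inter> {..<n}. int s) = (\<Sum>j<m. int (e j))"
        unfolding Nset using einj by (subst sum.reindex) (auto intro: inj_on_subset)
      finally show ?thesis .
    qed
    have s2: "gap_N G k = (\<Sum>s<n. int (L ! s) - int s)"
    proof -
      have "gap_N G k = (\<Sum>i = k + 1..g. int (L ! (g - i)) - int (g - i))"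
        unfolding gap_N_def gap_lambda_def gap_w_def L_def g_def
        by (intro sum.cong) auto
      also have "\<dots> = (\<Sum>s<n. int (L ! s) - int s)"
        by (rule sum.reindex_bij_witness[of _ "\<lambda>s. g - s" "\<lambda>i. g - i"])
          (auto simp: n_def)
      finally show ?thesis .
    qed
    have s3: "(\<Sum>i = 1..gap_m G k. gap_a G k i) = (\<Sum>s\<in>{p..<n}. int (L ! s)) - (\<Sum>j<m. int (e j))"
    proof -
      have "(\<Sum>i = 1..gap_m G k. gap_a G k i) = (\<Sum>i = 1..m. int (L ! (n - i)) - int (e (i - 1)))"
        using gm ga by (intro sum.cong) auto
      also have "\<dots> = (\<Sum>i = 1..m. int (L ! (n - i))) - (\<Sum>i = 1..m. int (e (i - 1)))"
        by (simp add: sum_subtractf)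
      also have "(\<Sum>i = 1..m. int (L ! (n - i))) = (\<Sum>s\<in>{p..<n}. int (L ! s))"
        by (rule sum.reindex_bij_witness[of _ "\<lambda>s. n - s" "\<lambda>i. n - i"])
          (use mpn in auto)
      also have "(\<Sum>i = 1..m. int (e (i - 1))) = (\<Sum>j<m. int (e j))"
        by (rule sum.reindex_bij_witness[of _ "\<lambda>s. s + 1" "\<lambda>i. i - 1"]) auto
      finally show ?thesis .
    qed
    have s4: "(\<Sum>s<n. int (L ! s)) = (\<Sum>t<p. int (L ! t)) + (\<Sum>s\<in>{p..<n}. int (L ! s))"
    proof -
      have "{..<n} = {..<p} \<union> {p..<n}" using mpn by auto
      thus ?thesis by (simp add: sum.union_disjoint ivl_disj_int(2))
    qed
    show ?thesis using s1 s2 s3 s4 by (simp add: sum_subtractf)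
  qed
  show ?thesis using P1 P2 P3 P4 by blast
qed

end
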